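(* Let $\Gamma$ be a splice diagram satisfying the edge determinant condition. Then the piecewise linear map $\rho:\Gamma\to\Delta_{n-1}$ is injective.
   Context: A splice diagram is a finite tree $\Gamma$ with at least one vertex of valency $\geq3$ and no vertex of valency $2$; vertices of valency $1$ are leaves, others nodes. For each node $v$ and edge $e$ at $v$ a positive integer weight $d_{v,e}$ is given; $d_{v,u}$ is the weight at $v$ of the edge toward $u$. For distinct vertices $u,v$, $\ell_{u,v}$ is the product of all $d_{w,e}$ with $w$ a node on the geodesic $[u,v]$ and $e$ an edge at $w$ not in $[u,v]$. Edge determinant condition: $d_{u,v}d_{v,u}>\ell_{u,v}$ for every edge $[u,v]$ between two nodes. With $n$ leaves, $\Delta_{n-1}\subset\mathbb{R}^n$ is the standard simplex with vertices the standard basis vectors $w_\lambda$ indexed by the leaves; $w_u=\sum_\lambda\ell_{u,\lambda}w_\lambda$ for a node $u$. The map $\rho$ sends each vertex $u$ to $w_u/|w_u|$ ($1$-norm), and each edge (identified with $[0,1]$) affinely onto the segment between the images of its endpoints. *)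

theory Defs
  imports Complex_Main
begin

definition is_path :: "('v \<Rightarrow> 'v \<Rightarrow> bool) \<Rightarrow> 'v set \<Rightarrow> 'v list \<Rightarrow> 'v \<Rightarrow> 'v \<Rightarrow> bool" where
  "is_path adj V p u v \<longleftrightarrow> p \<noteq> [] \<and> hd p = u \<and> last p = v \<and> distinct p \<and> set p \<subseteq> V \<and>
     (\<forall>i. Suc i < length p \<longrightarrow> adj (p ! i) (p ! Suc i))"

definition is_tree :: "'v set \<Rightarrow> ('v \<Rightarrow> 'v \<Rightarrow> bool) \<Rightarrow> bool" where
  "is_tree V adj \<longleftrightarrow> finite V \<and> V \<noteq> {} \<and>
     (\<forall>u v. adj u v \<longrightarrow> u \<in> V \<and> v \<in> V \<and> adj v u \<and> u \<noteq> v) \<and>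
     (\<forall>u\<in>V. \<forall>v\<in>V. \<exists>!p. is_path adj V p u v)"

definition geod :: "'v set \<Rightarrow> ('v \<Rightarrow> 'v \<Rightarrow> bool) \<Rightarrow> 'v \<Rightarrow> 'v \<Rightarrow> 'v list" where
  "geod V adj u v = (THE p. is_path adj V p u v)"

definition path_edge :: "'v list \<Rightarrow> 'v \<Rightarrow> 'v \<Rightarrow> bool" where
  "path_edge p x y \<longleftrightarrow> (\<exists>i. Suc i < length p \<and>
     ((p ! i = x \<and> p ! Suc i = y) \<or> (p ! i = y \<and> p ! Suc i = x)))"

definition nbrs :: "'v set \<Rightarrow> ('v \<Rightarrow> 'v \<Rightarrow> bool) \<Rightarrow> 'v \<Rightarrow> 'v set" where
  "nbrs V adj w = {x \<in> V. adj w x}"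

definition valency :: "'v set \<Rightarrow> ('v \<Rightarrow> 'v \<Rightarrow> bool) \<Rightarrow> 'v \<Rightarrow> nat" where
  "valency V adj w = card (nbrs V adj w)"

definition is_leaf :: "'v set \<Rightarrow> ('v \<Rightarrow> 'v \<Rightarrow> bool) \<Rightarrow> 'v \<Rightarrow> bool" where
  "is_leaf V adj w \<longleftrightarrow> w \<in> V \<and> valency V adj w = 1"

definition is_node :: "'v set \<Rightarrow> ('v \<Rightarrow> 'v \<Rightarrow> bool) \<Rightarrow> 'v \<Rightarrow> bool" where
  "is_node V adj w \<longleftrightarrow> w \<in> V \<and> valency V adj w \<noteq> 1"

definition leaves :: "'v set \<Rightarrow> ('v \<Rightarrow> 'v \<Rightarrow> bool) \<Rightarrow> 'v set" where
  "leaves V adj = {w. is_leaf V adj w}"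

text \<open>Splice diagram: a tree with a vertex of valency \<ge> 3, no vertex of valency 2,
  and positive integer weights d v e at every node v for every edge e = [v,x] at v
  (written d v x, with x the other endpoint).\<close>
definition splice_diagram :: "'v set \<Rightarrow> ('v \<Rightarrow> 'v \<Rightarrow> bool) \<Rightarrow> ('v \<Rightarrow> 'v \<Rightarrow> nat) \<Rightarrow> bool" where
  "splice_diagram V adj d \<longleftrightarrow> is_tree V adj \<and>
     (\<exists>v\<in>V. valency V adj v \<ge> 3) \<and> (\<forall>v\<in>V. valency V adj v \<noteq> 2) \<and>
     (\<forall>v x. is_node V adj v \<and> adj v x \<longrightarrow> d v x > 0)"

definition ell :: "'v set \<Rightarrow> ('v \<Rightarrow> 'v \<Rightarrow> bool) \<Rightarrow> ('v \<Rightarrow> 'v \<Rightarrow> nat) \<Rightarrow> 'v \<Rightarrow> 'v \<Rightarrow> nat" where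
  "ell V adj d u v = (let p = geod V adj u v in
     \<Prod>w \<in> {w \<in> set p. is_node V adj w}.
       \<Prod>x \<in> {x \<in> nbrs V adj w. \<not> path_edge p w x}. d w x)"

definition edge_det_cond :: "'v set \<Rightarrow> ('v \<Rightarrow> 'v \<Rightarrow> bool) \<Rightarrow> ('v \<Rightarrow> 'v \<Rightarrow> nat) \<Rightarrow> bool" where
  "edge_det_cond V adj d \<longleftrightarrow> (\<forall>u v. is_node V adj u \<and> is_node V adj v \<and> adj u v \<longrightarrow>
     d u v * d v u > ell V adj d u v)"

text \<open>R^n is identified with functions 'v \<Rightarrow> real supported on the leaf set;
  the basis vector w_\<lambda> is the indicator of the leaf \<lambda>.\<close>
definition wvec :: "'v set \<Rightarrow> ('v \<Rightarrow> 'v \<Rightarrow> bool) \<Rightarrow> ('v \<Rightarrow> 'v \<Rightarrow> nat) \<Rightarrow> 'v \<Rightarrow> 'v \<Rightarrow> real" where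
  "wvec V adj d u = (\<lambda>l. if is_leaf V adj l then
      (if is_leaf V adj u then (if l = u then 1 else 0) else real (ell V adj d u l))
     else 0)"

definition rho_vertex :: "'v set \<Rightarrow> ('v \<Rightarrow> 'v \<Rightarrow> bool) \<Rightarrow> ('v \<Rightarrow> 'v \<Rightarrow> nat) \<Rightarrow> 'v \<Rightarrow> 'v \<Rightarrow> real" where
  "rho_vertex V adj d u = (\<lambda>l. wvec V adj d u l / (\<Sum>m \<in> leaves V adj. \<bar>wvec V adj d u m\<bar>))"

text \<open>Geometric realization of the tree: points are barycentric coordinate functions
  supported on a single vertex or on the two endpoints of an edge.  The point
  (1-t)u + t v of the edge [u,v] is the function with value 1-t at u and t at v.\<close>
definition realization :: "'v set \<Rightarrow> ('v \<Rightarrow> 'v \<Rightarrow> bool) \<Rightarrow> ('v \<Rightarrow> real) set" where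
  "realization V adj = {c. (\<forall>x. 0 \<le> c x) \<and> (\<forall>x. x \<notin> V \<longrightarrow> c x = 0) \<and> sum c V = 1 \<and>
     (\<exists>u\<in>V. \<exists>v\<in>V. (u = v \<or> adj u v) \<and> (\<forall>x. x \<noteq> u \<and> x \<noteq> v \<longrightarrow> c x = 0))}"

definition rho :: "'v set \<Rightarrow> ('v \<Rightarrow> 'v \<Rightarrow> bool) \<Rightarrow> ('v \<Rightarrow> 'v \<Rightarrow> nat) \<Rightarrow> ('v \<Rightarrow> real) \<Rightarrow> 'v \<Rightarrow> real" where
  "rho V adj d c = (\<lambda>l. \<Sum>v \<in> V. c v * rho_vertex V adj d v l)"

end

theory Submission
  imports Defs
begin


lemma is_path_rev: "is_path adj V p u v \<Longrightarrow> (\<And>a b. adj a b \<Longrightarrow> adj b a) \<Longrightarrow> is_path adj V (rev p) v u"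
  unfolding is_path_def
  apply (auto simp: hd_rev last_rev rev_nth)
  subgoal for i
    apply (drule spec[of _ "length p - Suc (Suc i)"])
    by (auto simp: Suc_diff_Suc)
  done

lemma is_path_drop: "is_path adj V p u v \<Longrightarrow> i < length p \<Longrightarrow> is_path adj V (drop i p) (p!i) v"
  unfolding is_path_def by (auto simp: hd_drop_conv_nth dest: in_set_dropD)

lemma is_path_take: "is_path adj V p u v \<Longrightarrow> i < length p \<Longrightarrow> is_path adj V (take (Suc i) p) u (p!i)"
  unfolding is_path_def by (auto simp: hd_conv_nth last_conv_nth dest: in_set_takeD)

lemma is_path_Cons: "is_path adj V p u v \<Longrightarrow> adj b u \<Longrightarrow> b \<in> V \<Longrightarrow> b \<notin> set p \<Longrightarrow> is_path adj V (b#p) b v"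
  unfolding is_path_def
  apply (auto simp: nth_Cons split: nat.splits)
  by (metis hd_conv_nth)

lemma is_path_snoc: "is_path adj V p u v \<Longrightarrow> adj v e \<Longrightarrow> e \<in> V \<Longrightarrow> e \<notin> set p \<Longrightarrow> is_path adj V (p@[e]) u e"
  unfolding is_path_def
  apply (auto simp: nth_append)
  by (metis Suc_lessI diff_Suc_1 last_conv_nth)

lemma path_edge_nth: "distinct p \<Longrightarrow> m < length p \<Longrightarrow>
   path_edge p (p!m) x \<longleftrightarrow> ((0 < m \<and> x = p!(m-1)) \<or> (Suc m < length p \<and> x = p!Suc m))"
proof
  assume dp: "distinct p" and m: "m < length p" and "path_edge p (p!m) x"
  then obtain i where i: "Suc i < length p" "(p!i = p!m \<and> p!(Suc i) = x) \<or> (p!i = x \<and> p!Suc i = p!m)"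
    unfolding path_edge_def by blast
  show "(0 < m \<and> x = p!(m-1)) \<or> (Suc m < length p \<and> x = p!Suc m)"
  proof (cases "p!i = p!m \<and> p!(Suc i) = x")
    case True
    then have "i = m" using nth_eq_iff_index_eq[OF dp] i(1) m by simp
    then show ?thesis using True i by simp
  next
    case False
    then have "p!i = x" "p!Suc i = p!m" using i by auto
    then have "Suc i = m" using nth_eq_iff_index_eq[OF dp] i(1) m by simp
    then show ?thesis using \<open>p!i = x\<close> by auto
  qed
next
  assume dp: "distinct p" and m: "m < length p" and h: "(0 < m \<and> x = p!(m-1)) \<or> (Suc m < length p \<and> x = p!Suc m)"
  show "path_edge p (p!m) x"
  proof (cases "0 < m \<and> x = p!(m-1)")
    case True
    then show ?thesis unfolding path_edge_def using m
      by (intro exI[of _ "m-1"]) auto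
  next
    case False
    then show ?thesis unfolding path_edge_def using h
      by (intro exI[of _ "m"]) auto
  qed
qed

context fixes V :: "'v set" and adj :: "'v \<Rightarrow> 'v \<Rightarrow> bool"
  assumes T: "is_tree V adj"
begin

lemma adjD: "adj u v \<Longrightarrow> u \<in> V \<and> v \<in> V \<and> adj v u \<and> u \<noteq> v"
  using T unfolding is_tree_def by blast

lemma finV: "finite V" using T unfolding is_tree_def by blast

lemma path_unique: "is_path adj V p u v \<Longrightarrow> is_path adj V q u v \<Longrightarrow> p = q"
proof -
  assume a: "is_path adj V p u v" "is_path adj V q u v"
  then have "u \<in> V" "v \<in> V" unfolding is_path_def
    by (metis hd_in_set last_in_set subsetD)+
  then show ?thesis using T a unfolding is_tree_def by blast
qed

lemma geod_eq: "is_path adj V p u v \<Longrightarrow> geod V adj u v = p"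
  unfolding geod_def using path_unique by blast

lemma path_rev: "is_path adj V p u v \<Longrightarrow> is_path adj V (rev p) v u"
  using is_path_rev adjD by metis

lemma adj_in_path:
  assumes p: "is_path adj V p a y" and ab: "adj a b" and b: "b \<in> set p"
  shows "Suc 1 \<le> length p \<and> p ! 1 = b"
proof -
  obtain j where j: "j < length p" "p ! j = b" using b by (meson in_set_conv_nth)
  have "j \<noteq> 0" using j p ab adjD unfolding is_path_def by (metis hd_conv_nth)
  have "is_path adj V (take (Suc j) p) a b" using is_path_take[OF p j(1)] j by simp
  moreover have "is_path adj V [a,b] a b" using ab adjD unfolding is_path_def
    by (auto simp: less_Suc_eq)
  ultimately have "take (Suc j) p = [a,b]" using path_unique by blast
  then have "length (take (Suc j) p) = 2" by simp
  then have "j = 1" using j by simp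
  then show ?thesis using j by auto
qed

lemma adj_idx:
  assumes p: "is_path adj V p u v" and ab: "adj a b" and i: "i < length p" "p ! i = a"
    and j: "j < length p" "p ! j = b"
  shows "j = Suc i \<or> i = Suc j"
proof (cases "i < j")
  case True
  have "is_path adj V (drop i p) a v" using is_path_drop[OF p i(1)] i by simp
  moreover have "b \<in> set (drop i p)" using True j
    by (auto simp: in_set_conv_nth intro!: exI[of _ "j-i"])
  ultimately have "Suc 1 \<le> length (drop i p) \<and> (drop i p) ! 1 = b" using adj_in_path[OF _ ab] by blast
  then have "p ! Suc i = p ! j" "Suc i < length p" using j i True by auto
  moreover have "distinct p" using p unfolding is_path_def by blast
  ultimately have "Suc i = j" using nth_eq_iff_index_eq j(1) by blast
  then show ?thesis by blast
next
  case False
  have "i \<noteq> j" using adjD[OF ab] i j by auto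
  then have "j < i" using False by simp
  have "is_path adj V (drop j p) b v" using is_path_drop[OF p j(1)] j by simp
  moreover have "a \<in> set (drop j p)" using \<open>j < i\<close> i
    by (auto simp: in_set_conv_nth intro!: exI[of _ "i-j"])
  ultimately have "Suc 1 \<le> length (drop j p) \<and> (drop j p) ! 1 = a" using adj_in_path[OF _ conjunct1[OF conjunct2[OF conjunct2[OF adjD[OF ab]]]]] by blast
  then have "p ! Suc j = p ! i" "Suc j < length p" using j i \<open>j < i\<close> by auto
  moreover have "distinct p" using p unfolding is_path_def by blast
  ultimately have "Suc j = i" using nth_eq_iff_index_eq i(1) by blast
  then show ?thesis by blast
qed

end



context fixes V :: "'v set" and adj :: "'v \<Rightarrow> 'v \<Rightarrow> bool"
  assumes T: "is_tree V adj"
begin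

lemma path_len_card: "is_path adj V p u v \<Longrightarrow> length p \<le> card V"
proof -
  assume "is_path adj V p u v"
  then have "distinct p" "set p \<subseteq> V" unfolding is_path_def by auto
  then show ?thesis using card_mono[OF finV[OF T], of "set p"] distinct_card[of p] by simp
qed

lemma nbrs_fin: "finite (nbrs V adj w)"
  using finV[OF T] unfolding nbrs_def by simp

lemma extend_aux:
  "is_path adj V p u v \<Longrightarrow> Suc 1 \<le> length p \<Longrightarrow> \<exists>q l. is_path adj V (p@q) u l \<and> is_leaf V adj l"
proof (induction "card V - length p" arbitrary: p v rule: less_induct)
  case less
  note p = less.prems(1)
  show ?case
  proof (cases "is_leaf V adj v")
    case True
    then show ?thesis using p by (intro exI[of _ "[]"]) auto
  next
    case False
    have vV: "v \<in> V" using p unfolding is_path_def by auto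
    define pr where "pr = p ! (length p - 2)"
    have lp: "last p = p ! (length p - 1)" using less.prems(2) by (subst last_conv_nth) auto
    have "adj pr (p ! Suc (length p - 2))" using p less.prems(2) unfolding is_path_def pr_def by auto
    moreover have "Suc (length p - 2) = length p - 1" using less.prems(2) by simp
    ultimately have "adj pr v" using p lp unfolding is_path_def by auto
    then have vpr: "adj v pr" using adjD[OF T] by blast
    then have prn: "pr \<in> nbrs V adj v" unfolding nbrs_def using adjD[OF T] by blast
    have "valency V adj v \<noteq> 1" using False vV unfolding is_leaf_def by simp
    have "\<not> nbrs V adj v \<subseteq> {pr}"
    proof
      assume "nbrs V adj v \<subseteq> {pr}"
      then have "nbrs V adj v = {pr}" using prn by blast
      then show False using \<open>valency V adj v \<noteq> 1\<close> unfolding valency_def by simp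
    qed
    then obtain y where y: "y \<in> nbrs V adj v" "y \<noteq> pr" by blast
    have vy: "adj v y" using y unfolding nbrs_def by simp
    have yns: "y \<notin> set p"
    proof
      assume "y \<in> set p"
      then have "rev p ! 1 = y" using adj_in_path[OF T path_rev[OF T p] vy] by simp
      moreover have "rev p ! 1 = pr" unfolding pr_def using less.prems(2)
        by (simp add: rev_nth numeral_2_eq_2)
      ultimately show False using y by simp
    qed
    have p2: "is_path adj V (p@[y]) u y" using is_path_snoc[OF p vy] adjD[OF T vy] yns by blast
    have "length (p@[y]) \<le> card V" using path_len_card[OF p2] .
    then have "card V - length (p@[y]) < card V - length p" by simp
    then obtain q l where "is_path adj V ((p@[y])@q) u l \<and> is_leaf V adj l"
      using less.hyps[OF _ p2] less.prems(2) by fastforce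
    then show ?thesis by (intro exI[of _ "[y]@q"]) auto
  qed
qed

lemma leaf_path:
  assumes p: "is_path adj V p u v" and l: "Suc 1 \<le> length p"
  shows "\<exists>L. is_path adj V L (hd L) (last L) \<and> is_leaf V adj (hd L) \<and> is_leaf V adj (last L) \<and> set p \<subseteq> set L"
proof -
  obtain q l1 where q: "is_path adj V (p@q) u l1" "is_leaf V adj l1" using extend_aux[OF p l] by blast
  have r: "is_path adj V (rev (p@q)) l1 u" using path_rev[OF T q(1)] .
  have "Suc 1 \<le> length (rev (p@q))" using l by simp
  then obtain q' l2 where q': "is_path adj V (rev (p@q)@q') l1 l2" "is_leaf V adj l2"
    using extend_aux[OF r] by blast
  have L: "is_path adj V (rev (rev (p@q)@q')) l2 l1" using path_rev[OF T q'(1)] .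
  then have "hd (rev (rev (p@q)@q')) = l2" "last (rev (rev (p@q)@q')) = l1" unfolding is_path_def by auto
  then show ?thesis using L q q' by (intro exI[of _ "rev (rev (p@q)@q')"]) auto
qed

lemma adj_consec:
  assumes L: "is_path adj V L u v" and ab: "adj a b" and a: "a \<in> set L" and b: "b \<in> set L"
  shows "\<exists>i. Suc i < length L \<and> {a,b} = {L!i, L!Suc i}"
proof -
  obtain i j where i: "i < length L" "L!i = a" and j: "j < length L" "L!j = b"
    using a b by (meson in_set_conv_nth)
  have "j = Suc i \<or> i = Suc j" using adj_idx[OF T L ab i j] .
  then show ?thesis
  proof
    assume "j = Suc i" then show ?thesis using i j by (intro exI[of _ i]) auto
  next
    assume "i = Suc j" then show ?thesis using i j by (intro exI[of _ j]) auto
  qed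
qed

lemma two_edges_path:
  assumes ab: "adj a b" and ce: "adj c e"
  shows "\<exists>p x y. is_path adj V p x y \<and> Suc 1 \<le> length p \<and> {a,b,c,e} \<subseteq> set p"
proof -
  have aV: "a \<in> V" "b \<in> V" "c \<in> V" "e \<in> V" "a \<noteq> b" using adjD[OF T ab] adjD[OF T ce] by auto
  obtain g where g: "is_path adj V g a c" using T aV unfolding is_tree_def by blast
  obtain p1 x where p1: "is_path adj V p1 x c" "a \<in> set p1" "b \<in> set p1"
  proof (cases "b \<in> set g")
    case True
    then show ?thesis using that[OF g] g unfolding is_path_def by auto
  next
    case False
    have bg: "is_path adj V (b#g) b c" using is_path_Cons[OF g _ aV(2) False] adjD[OF T ab] by blast
    have "a \<in> set g" using g unfolding is_path_def by auto
    then show ?thesis using that[OF bg] by auto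
  qed
  obtain p where p: "is_path adj V p x (if e \<in> set p1 then c else e)" "set p1 \<subseteq> set p" "c \<in> set p" "e \<in> set p"
  proof (cases "e \<in> set p1")
    case True
    then show ?thesis using that[OF _ order.refl] p1 unfolding is_path_def by auto
  next
    case False
    have pe: "is_path adj V (p1@[e]) x e" using is_path_snoc[OF p1(1) ce aV(4) False] .
    have "c \<in> set p1" using p1 unfolding is_path_def by auto
    then show ?thesis using that[of "p1@[e]"] pe False by auto
  qed
  have "{a,b} \<subseteq> set p" using p p1 by auto
  then have "card {a,b} \<le> card (set p)" by (simp add: card_mono)
  then have "Suc 1 \<le> length p" using aV(5) card_length[of p] by simp
  then show ?thesis using p p1 by blast
qed

end



definition Hp :: "'v set \<Rightarrow> ('v \<Rightarrow> 'v \<Rightarrow> bool) \<Rightarrow> ('v \<Rightarrow> 'v \<Rightarrow> nat) \<Rightarrow> 'v \<Rightarrow> 'v set \<Rightarrow> nat" where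
  "Hp V adj d w S = (\<Prod>x\<in>{x\<in>nbrs V adj w. x \<notin> S}. d w x)"

definition Sq :: "'v list \<Rightarrow> nat \<Rightarrow> 'v set" where
  "Sq q m = {x. (0<m \<and> x = q!(m-1)) \<or> (Suc m < length q \<and> x = q!Suc m)}"

context fixes V :: "'v set" and adj :: "'v \<Rightarrow> 'v \<Rightarrow> bool" and d :: "'v \<Rightarrow> 'v \<Rightarrow> nat"
  assumes S: "splice_diagram V adj d"
begin

lemma T: "is_tree V adj" using S unfolding splice_diagram_def by blast

lemma dpos: "is_node V adj v \<Longrightarrow> adj v x \<Longrightarrow> d v x > 0"
  using S unfolding splice_diagram_def by blast

lemma Hp_pos: "is_node V adj w \<Longrightarrow> Hp V adj d w X > 0"
  unfolding Hp_def by (rule prod_pos) (auto simp: nbrs_def dpos)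

lemma Hp_split: "b \<in> nbrs V adj w \<Longrightarrow> b \<notin> X \<Longrightarrow> Hp V adj d w X = d w b * Hp V adj d w (insert b X)"
proof -
  assume b: "b \<in> nbrs V adj w" "b \<notin> X"
  have f: "finite {x\<in>nbrs V adj w. x \<notin> X}" using nbrs_fin[OF T] by simp
  have "Hp V adj d w X = d w b * (\<Prod>x\<in>{x\<in>nbrs V adj w. x \<notin> X} - {b}. d w x)"
    unfolding Hp_def using prod.remove[OF f, of b] b by simp
  moreover have "{x\<in>nbrs V adj w. x \<notin> X} - {b} = {x\<in>nbrs V adj w. x \<notin> insert b X}" by auto
  ultimately show ?thesis unfolding Hp_def by simp
qed

lemma ell_pos: "ell V adj d u v > 0"
  unfolding ell_def Let_def
  by (intro prod_pos) (auto simp: nbrs_def dpos)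

lemma ell_path:
  assumes q: "is_path adj V q u v"
  shows "ell V adj d u v = (\<Prod>m\<in>{m. m < length q \<and> is_node V adj (q!m)}. Hp V adj d (q!m) (Sq q m))"
proof -
  have dq: "distinct q" using q unfolding is_path_def by blast
  have g: "geod V adj u v = q" using geod_eq[OF T q] .
  have se: "{w \<in> set q. is_node V adj w} = (\<lambda>m. q!m) ` {m. m < length q \<and> is_node V adj (q!m)}"
    by (auto simp: in_set_conv_nth)
  have inj: "inj_on (\<lambda>m. q!m) {m. m < length q \<and> is_node V adj (q!m)}"
    using dq by (auto simp: inj_on_def nth_eq_iff_index_eq)
  have "ell V adj d u v = (\<Prod>w \<in> {w \<in> set q. is_node V adj w}.
       \<Prod>x \<in> {x \<in> nbrs V adj w. \<not> path_edge q w x}. d w x)"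
    unfolding ell_def Let_def g ..
  also have "\<dots> = (\<Prod>m\<in>{m. m < length q \<and> is_node V adj (q!m)}.
       \<Prod>x \<in> {x \<in> nbrs V adj (q!m). \<not> path_edge q (q!m) x}. d (q!m) x)"
    unfolding se by (rule prod.reindex[OF inj, unfolded comp_def])
  also have "\<dots> = (\<Prod>m\<in>{m. m < length q \<and> is_node V adj (q!m)}. Hp V adj d (q!m) (Sq q m))"
  proof (rule prod.cong[OF refl])
    fix m assume "m \<in> {m. m < length q \<and> is_node V adj (q!m)}"
    then have m: "m < length q" by simp
    have "{x \<in> nbrs V adj (q!m). \<not> path_edge q (q!m) x} = {x \<in> nbrs V adj (q!m). x \<notin> Sq q m}"
      using path_edge_nth[OF dq m] unfolding Sq_def by auto
    then show "(\<Prod>x \<in> {x \<in> nbrs V adj (q!m). \<not> path_edge q (q!m) x}. d (q!m) x) = Hp V adj d (q!m) (Sq q m)"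
      unfolding Hp_def by simp
  qed
  finally show ?thesis .
qed

end



definition Tt :: "'v set \<Rightarrow> ('v \<Rightarrow> 'v \<Rightarrow> bool) \<Rightarrow> ('v \<Rightarrow> 'v \<Rightarrow> nat) \<Rightarrow> 'v list \<Rightarrow> nat \<Rightarrow> nat" where
  "Tt V adj d L j = Hp V adj d (L!j) {L!(j-1), L!Suc j}"

context fixes V :: "'v set" and adj :: "'v \<Rightarrow> 'v \<Rightarrow> bool" and d :: "'v \<Rightarrow> 'v \<Rightarrow> nat"
  assumes S: "splice_diagram V adj d"
begin

lemma leaf_not_node: "is_leaf V adj w \<Longrightarrow> \<not> is_node V adj w"
  unfolding is_leaf_def is_node_def by simp

lemma inner_node:
  assumes L: "is_path adj V L a b" and j: "0 < j" "Suc j < length L"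
  shows "is_node V adj (L!j)"
proof -
  have dL: "distinct L" using L unfolding is_path_def by blast
  have sj: "Suc (j-1) = j" using j by simp
  have "Suc (j-1) < length L" using j by simp
  then have "adj (L!(j-1)) (L!Suc (j-1))" using L unfolding is_path_def by blast
  then have a1: "adj (L!j) (L!(j-1))" using sj adjD[OF T[OF S]] by auto
  have a2: "adj (L!j) (L!Suc j)" using L j unfolding is_path_def by auto
  have ne: "L!(j-1) \<noteq> L!Suc j" using dL j nth_eq_iff_index_eq by fastforce
  have "{L!(j-1), L!Suc j} \<subseteq> nbrs V adj (L!j)" using a1 a2 adjD[OF T[OF S]] unfolding nbrs_def by auto
  then have "card {L!(j-1), L!Suc j} \<le> valency V adj (L!j)"
    unfolding valency_def using nbrs_fin[OF T[OF S]] card_mono by blast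
  then have "valency V adj (L!j) \<ge> 2" using ne by simp
  moreover have "L!j \<in> V" using L j unfolding is_path_def by auto
  ultimately show ?thesis unfolding is_node_def by simp
qed

lemma ell_to_last:
  assumes L: "is_path adj V L a b" and bl: "is_leaf V adj b" and kL: "length L = Suc k"
    and i: "0 < i" "i < k"
  shows "ell V adj d (L!i) b = Hp V adj d (L!i) {L!Suc i} * (\<Prod>j\<in>{Suc i..<k}. Tt V adj d L j)"
proof -
  define q where "q = drop i L"
  have q: "is_path adj V q (L!i) b" unfolding q_def using is_path_drop[OF L] i kL by simp
  have lq: "length q = Suc (k - i)" unfolding q_def using kL i by simp
  have qn: "m < length q \<Longrightarrow> q!m = L!(i+m)" for m unfolding q_def using i kL by simp
  have lastL: "L!k = b" using L kL unfolding is_path_def by (metis diff_Suc_1 last_conv_nth list.size(3) nat.distinct(1))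
  have setq: "{m. m < length q \<and> is_node V adj (q!m)} = {0..<k-i}"
  proof (rule set_eqI, rule iffI)
    fix m assume m: "m \<in> {m. m < length q \<and> is_node V adj (q!m)}"
    have "m \<noteq> k - i"
    proof
      assume "m = k - i"
      then have "q!m = b" using qn lq lastL i by simp
      then show False using m leaf_not_node[OF bl] by simp
    qed
    then show "m \<in> {0..<k-i}" using m lq by auto
  next
    fix m assume m: "m \<in> {0..<k-i}"
    then have "is_node V adj (L!(i+m))" using inner_node[OF L] i kL by simp
    then show "m \<in> {m. m < length q \<and> is_node V adj (q!m)}" using m lq qn by simp
  qed
  have Sq0: "Sq q 0 = {L!Suc i}" unfolding Sq_def using qn lq i by auto
  have SqS: "Sq q m = {L!(i+m-1), L!Suc (i+m)}" if "0 < m" "m < k - i" for m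
    unfolding Sq_def using qn lq that by auto
  have "ell V adj d (L!i) b = (\<Prod>m\<in>{0..<k-i}. Hp V adj d (q!m) (Sq q m))"
    using ell_path[OF S q] setq by simp
  also have "\<dots> = Hp V adj d (q!0) (Sq q 0) * (\<Prod>m\<in>{Suc 0..<k-i}. Hp V adj d (q!m) (Sq q m))"
    using i by (simp add: prod.atLeast_Suc_lessThan)
  also have "(\<Prod>m\<in>{Suc 0..<k-i}. Hp V adj d (q!m) (Sq q m)) = (\<Prod>m\<in>{Suc 0..<k-i}. Tt V adj d L (m + i))"
    by (rule prod.cong[OF refl]) (simp add: SqS qn lq Tt_def add.commute)
  also have "\<dots> = (\<Prod>j\<in>{Suc 0 + i..<k - i + i}. Tt V adj d L j)"
    by (rule prod.shift_bounds_nat_ivl[symmetric])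
  also have "{Suc 0 + i..<k - i + i} = {Suc i..<k}" using i by auto
  finally show ?thesis using qn lq Sq0 by simp
qed

lemma Tt_rev:
  assumes kL: "length L = Suc k" and j: "0 < j" "j < k"
  shows "Tt V adj d (rev L) j = Tt V adj d L (k - j)"
proof -
  have "rev L ! j = L ! (k - j)" "rev L ! (j - 1) = L ! Suc (k - j)" "rev L ! Suc j = L ! (k - j - 1)"
    using kL j by (auto simp: rev_nth Suc_diff_Suc Suc_diff_le)
  then show ?thesis unfolding Tt_def by (simp add: insert_commute)
qed

lemma ell_to_first:
  assumes L: "is_path adj V L a b" and al: "is_leaf V adj a" and kL: "length L = Suc k"
    and i: "0 < i" "i < k"
  shows "ell V adj d (L!i) a = Hp V adj d (L!i) {L!(i - 1)} * (\<Prod>j\<in>{Suc 0..<i}. Tt V adj d L j)"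
proof -
  have R: "is_path adj V (rev L) b a" using path_rev[OF T[OF S] L] .
  have kR: "length (rev L) = Suc k" using kL by simp
  have i': "0 < k - i" "k - i < k" using i by auto
  have e: "ell V adj d (rev L ! (k-i)) a = Hp V adj d (rev L ! (k-i)) {rev L ! Suc (k-i)} * (\<Prod>j\<in>{Suc (k-i)..<k}. Tt V adj d (rev L) j)"
    using ell_to_last[OF R al kR i'] .
  have r1: "rev L ! (k-i) = L!i" "rev L ! Suc (k-i) = L!(i-1)" using kL i by (auto simp: rev_nth Suc_diff_Suc)
  have "(\<Prod>j\<in>{Suc (k-i)..<k}. Tt V adj d (rev L) j) = (\<Prod>j\<in>{Suc (k-i)..<k}. Tt V adj d L (k - j))"
    by (rule prod.cong[OF refl]) (use Tt_rev[OF kL] in auto)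
  also have "\<dots> = (\<Prod>j\<in>{Suc 0..<i}. Tt V adj d L j)"
    by (rule prod.reindex_bij_witness[where i="\<lambda>j. k - j" and j="\<lambda>j. k - j"]) (use i in auto)
  finally show ?thesis using e r1 by simp
qed

lemma ell_adj:
  assumes L: "is_path adj V L a b" and kL: "length L = Suc k"
    and i: "0 < i" "Suc i < k"
  shows "ell V adj d (L!i) (L!Suc i) = Hp V adj d (L!i) {L!Suc i} * Hp V adj d (L!Suc i) {L!i}"
proof -
  have a: "adj (L!i) (L!Suc i)" using L i kL unfolding is_path_def by auto
  have ne: "L!i \<noteq> L!Suc i" using adjD[OF T[OF S] a] by blast
  have q: "is_path adj V [L!i, L!Suc i] (L!i) (L!Suc i)" using a adjD[OF T[OF S] a]
    unfolding is_path_def by (auto simp: less_Suc_eq)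
  have n1: "is_node V adj (L!i)" "is_node V adj (L!Suc i)" using inner_node[OF L] i kL by auto
  have "{m. m < length [L!i, L!Suc i] \<and> is_node V adj ([L!i, L!Suc i]!m)} = {0, 1}"
    using n1 by (auto simp: less_Suc_eq)
  moreover have "Sq [L!i, L!Suc i] 0 = {L!Suc i}" "Sq [L!i, L!Suc i] 1 = {L!i}" unfolding Sq_def by auto
  ultimately show ?thesis using ell_path[OF S q] by simp
qed

end



lemma trans_D:
  fixes x y :: "nat \<Rightarrow> real"
  assumes pos: "\<forall>m\<le>k. x m \<ge> 0 \<and> y m \<ge> 0"
    and cons: "\<forall>m<k. x m * y (Suc m) > x (Suc m) * y m"
  shows "m < n \<Longrightarrow> n \<le> k \<Longrightarrow> x m * y n > x n * y m"
proof (induction n)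
  case 0 then show ?case by simp
next
  case (Suc n)
  show ?case
  proof (cases "m = n")
    case True then show ?thesis using cons Suc by simp
  next
    case False
    then have h1: "x m * y n > x n * y m" using Suc by simp
    have h2: "x n * y (Suc n) > x (Suc n) * y n" using cons Suc by simp
    have p: "x m \<ge> 0" "y m \<ge> 0" "x n \<ge> 0" "y n \<ge> 0" "x (Suc n) \<ge> 0" "y (Suc n) \<ge> 0"
      using pos Suc by auto
    have "(x m * y n) * (x n * y (Suc n)) > (x n * y m) * (x (Suc n) * y n)"
    proof (rule mult_strict_mono[OF h1 h2])
      have "0 \<le> x n * y m" using p by simp
      then show "0 < x m * y n" using h1 by linarith
      show "0 \<le> x (Suc n) * y n" using p by simp
    qed
    then have "(x n * y n) * (x m * y (Suc n)) > (x n * y n) * (x (Suc n) * y m)"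
      by (simp add: algebra_simps)
    moreover have "x n * y n \<ge> 0" using p by simp
    ultimately show ?thesis by (auto simp: mult_less_cancel_left)
  qed
qed

lemma alg_core:
  fixes x y :: "nat \<Rightarrow> real"
  assumes pos: "\<forall>m\<le>k. x m \<ge> 0 \<and> y m \<ge> 0"
    and cons: "\<forall>m<k. x m * y (Suc m) > x (Suc m) * y m"
    and ij: "i \<le> j" "j < k"
    and co: "a \<ge> 0" "b \<ge> 0" "a' \<ge> 0" "b' \<ge> 0" "a + b = 1" "a' + b' = 1"
    and ex: "a * x i + b * x (Suc i) = a' * x j + b' * x (Suc j)"
    and ey: "a * y i + b * y (Suc i) = a' * y j + b' * y (Suc j)"
  shows "(i = j \<and> a = a') \<or> (j = Suc i \<and> a = 0 \<and> b' = 0)"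
proof -
  define D where "D m n = x m * y n - x n * y m" for m n
  have Dp: "m < n \<Longrightarrow> n \<le> k \<Longrightarrow> D m n > 0" for m n
    using trans_D[OF pos cons] unfolding D_def by force
  have D0: "D m m = 0" for m unfolding D_def by simp
  have Da: "D m n = - D n m" for m n unfolding D_def by simp
  have key: "a*a' * D i j + a*b' * D i (Suc j) + b*a' * D (Suc i) j + b*b' * D (Suc i) (Suc j) = 0"
  proof -
    have "a*a' * D i j + a*b' * D i (Suc j) + b*a' * D (Suc i) j + b*b' * D (Suc i) (Suc j)
      = (a * x i + b * x (Suc i)) * (a' * y j + b' * y (Suc j)) - (a' * x j + b' * x (Suc j)) * (a * y i + b * y (Suc i))"
      unfolding D_def by (simp add: algebra_simps)
    also have "\<dots> = 0" using ex ey by simp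
    finally show ?thesis .
  qed
  consider "i = j" | "j = Suc i" | "Suc i < j" using ij by linarith
  then show ?thesis
  proof cases
    case 1
    then have "(a*b' - b*a') * D i (Suc i) = 0" using key D0 Da[of "Suc i" i] by (simp add: algebra_simps)
    moreover have "D i (Suc i) > 0" using Dp ij 1 by simp
    ultimately have "a*b' = b*a'" by simp
    moreover have "b = 1 - a" "b' = 1 - a'" using co by auto
    ultimately have "a*(1-a') = (1-a)*a'" by simp
    then have "a - a*a' = a' - a*a'" by (simp add: algebra_simps)
    then have "a = a'" by linarith
    then show ?thesis using 1 by simp
  next
    case 2
    have d1: "D i (Suc i) > 0" "D i (Suc (Suc i)) > 0" "D (Suc i) (Suc (Suc i)) > 0"
      using Dp ij 2 by auto
    have "a*a' * D i (Suc i) + a*b' * D i (Suc (Suc i)) + b*b' * D (Suc i) (Suc (Suc i)) = 0"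
      using key 2 D0 by simp
    moreover have t: "a*a' * D i (Suc i) \<ge> 0" "a*b' * D i (Suc (Suc i)) \<ge> 0" "b*b' * D (Suc i) (Suc (Suc i)) \<ge> 0"
      using co d1 by auto
    ultimately have "a*a' * D i (Suc i) = 0" "a*b' * D i (Suc (Suc i)) = 0" "b*b' * D (Suc i) (Suc (Suc i)) = 0"
      by linarith+
    then have z: "a*a' = 0" "a*b' = 0" "b*b' = 0" using d1 by auto
    have "a * (a' + b') = a*a' + a*b'" by (simp add: distrib_left)
    then have "a * (a' + b') = 0" using z by simp
    then have "a = 0" using co by simp
    then have "b = 1" using co by simp
    then have "b' = 0" using \<open>b*b' = 0\<close> by simp
    then show ?thesis using 2 \<open>a = 0\<close> by simp
  next
    case 3
    define M where "M = min (min (D i j) (D i (Suc j))) (min (D (Suc i) j) (D (Suc i) (Suc j)))"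
    have "M > 0" unfolding M_def using Dp ij 3 by auto
    have c: "a*a' \<ge> 0" "a*b' \<ge> 0" "b*a' \<ge> 0" "b*b' \<ge> 0" using co by auto
    have "a*a' * D i j \<ge> a*a' * M" by (rule mult_left_mono[OF _ c(1)]) (simp add: M_def)
    moreover have "a*b' * D i (Suc j) \<ge> a*b' * M" by (rule mult_left_mono[OF _ c(2)]) (simp add: M_def)
    moreover have "b*a' * D (Suc i) j \<ge> b*a' * M" by (rule mult_left_mono[OF _ c(3)]) (simp add: M_def)
    moreover have "b*b' * D (Suc i) (Suc j) \<ge> b*b' * M" by (rule mult_left_mono[OF _ c(4)]) (simp add: M_def)
    moreover have "a*a' * M + a*b' * M + b*a' * M + b*b' * M = (a+b)*(a'+b')*M" by (simp add: algebra_simps)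
    ultimately have "a*a' * D i j + a*b' * D i (Suc j) + b*a' * D (Suc i) j + b*b' * D (Suc i) (Suc j) \<ge> M"
      using co by simp
    then show ?thesis using key \<open>M > 0\<close> by simp
  qed
qed

lemma alg:
  fixes x y :: "nat \<Rightarrow> real"
  assumes pos: "\<forall>m\<le>k. x m \<ge> 0 \<and> y m \<ge> 0"
    and cons: "\<forall>m<k. x m * y (Suc m) > x (Suc m) * y m"
    and ij: "i < k" "j < k"
    and co: "a \<ge> 0" "b \<ge> 0" "a' \<ge> 0" "b' \<ge> 0" "a + b = 1" "a' + b' = 1"
    and ex: "a * x i + b * x (Suc i) = a' * x j + b' * x (Suc j)"
    and ey: "a * y i + b * y (Suc i) = a' * y j + b' * y (Suc j)"
  shows "(i = j \<and> a = a') \<or> (j = Suc i \<and> a = 0 \<and> b' = 0) \<or> (i = Suc j \<and> a' = 0 \<and> b = 0)"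
proof (cases "i \<le> j")
  case True
  then show ?thesis using alg_core[OF pos cons True ij(2) co ex ey] by blast
next
  case False
  then have "j \<le> i" by simp
  from alg_core[OF pos cons this ij(1) co(3,4,1,2,6,5) ex[symmetric] ey[symmetric]] show ?thesis by auto
qed




context fixes V :: "'v set" and adj :: "'v \<Rightarrow> 'v \<Rightarrow> bool" and d :: "'v \<Rightarrow> 'v \<Rightarrow> nat"
  assumes S: "splice_diagram V adj d" and E: "edge_det_cond V adj d"
begin

lemma key_ell:
  assumes L: "is_path adj V L a b" and al: "is_leaf V adj a" and bl: "is_leaf V adj b"
    and kL: "length L = Suc k" and i: "0 < i" "Suc i < k"
  shows "ell V adj d (L!i) a * ell V adj d (L!Suc i) b > ell V adj d (L!Suc i) a * ell V adj d (L!i) b"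
proof -
  note TT = T[OF S]
  have dL: "distinct L" using L unfolding is_path_def by blast
  have ad: "Suc m < length L \<Longrightarrow> adj (L!m) (L!Suc m)" for m using L unfolding is_path_def by blast
  have nb: "Suc m < length L \<Longrightarrow> L!Suc m \<in> nbrs V adj (L!m) \<and> L!m \<in> nbrs V adj (L!Suc m)" for m
    using ad[of m] adjD[OF TT, of "L!m" "L!Suc m"] unfolding nbrs_def by auto
  have neq: "m < length L \<Longrightarrow> n < length L \<Longrightarrow> m \<noteq> n \<Longrightarrow> L!m \<noteq> L!n" for m n
    using dL nth_eq_iff_index_eq by blast
  have im: "Suc (i - 1) = i" using i by simp
  define P1 where "P1 = (\<Prod>j\<in>{Suc 0..<i}. Tt V adj d L j)"
  define P2 where "P2 = (\<Prod>j\<in>{Suc (Suc i)..<k}. Tt V adj d L j)"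
  define T1 where "T1 = Tt V adj d L i"
  define T2 where "T2 = Tt V adj d L (Suc i)"
  have e1: "ell V adj d (L!i) a = Hp V adj d (L!i) {L!(i - 1)} * P1"
    unfolding P1_def using ell_to_first[OF S L al kL] i by simp
  have e2: "ell V adj d (L!Suc i) b = Hp V adj d (L!Suc i) {L!Suc (Suc i)} * P2"
    unfolding P2_def using ell_to_last[OF S L bl kL] i by simp
  have e3: "ell V adj d (L!Suc i) a = Hp V adj d (L!Suc i) {L!i} * (P1 * T1)"
    unfolding P1_def T1_def using ell_to_first[OF S L al kL, of "Suc i"] i
    by (simp add: prod.atLeastLessThan_Suc)
  have e4: "ell V adj d (L!i) b = Hp V adj d (L!i) {L!Suc i} * (T2 * P2)"
    unfolding P2_def T2_def using ell_to_last[OF S L bl kL, of i] i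
    by (simp add: prod.atLeast_Suc_lessThan)
  have e5: "ell V adj d (L!i) (L!Suc i) = Hp V adj d (L!i) {L!Suc i} * Hp V adj d (L!Suc i) {L!i}"
    using ell_adj[OF S L kL i] .
  have nbi: "L!Suc i \<in> nbrs V adj (L!i)" "L!(i-1) \<in> nbrs V adj (L!i)"
    "L!i \<in> nbrs V adj (L!Suc i)" "L!Suc (Suc i) \<in> nbrs V adj (L!Suc i)"
    using nb[of i] nb[of "i-1"] nb[of "Suc i"] im kL i by auto
  have ne: "L!Suc i \<noteq> L!(i-1)" "L!i \<noteq> L!Suc (Suc i)" using neq kL i by auto
  have h1: "Hp V adj d (L!i) {L!(i - 1)} = d (L!i) (L!Suc i) * T1"
    unfolding T1_def Tt_def using Hp_split[OF S nbi(1), of "{L!(i-1)}"] ne by (simp add: insert_commute)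
  have h2: "Hp V adj d (L!i) {L!Suc i} = d (L!i) (L!(i-1)) * T1"
    unfolding T1_def Tt_def using Hp_split[OF S nbi(2), of "{L!Suc i}"] ne by simp
  have h3: "Hp V adj d (L!Suc i) {L!Suc (Suc i)} = d (L!Suc i) (L!i) * T2"
    unfolding T2_def Tt_def using Hp_split[OF S nbi(3), of "{L!Suc (Suc i)}"] ne by simp
  have h4: "Hp V adj d (L!Suc i) {L!i} = d (L!Suc i) (L!Suc (Suc i)) * T2"
    unfolding T2_def Tt_def using Hp_split[OF S nbi(4), of "{L!i}"] ne by (simp add: insert_commute)
  have nodes: "is_node V adj (L!i)" "is_node V adj (L!Suc i)" using inner_node[OF S L] i kL by auto
  have det: "d (L!i) (L!Suc i) * d (L!Suc i) (L!i) > ell V adj d (L!i) (L!Suc i)"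
    using E nodes ad[of i] kL i unfolding edge_det_cond_def by auto
  have Cpos: "T1 * T2 * P1 * P2 > 0"
    unfolding T1_def T2_def P1_def P2_def Tt_def
    using Hp_pos[OF S] inner_node[OF S L] i kL
    by (intro mult_pos_pos prod_pos) auto
  have lhs: "ell V adj d (L!i) a * ell V adj d (L!Suc i) b
     = (d (L!i) (L!Suc i) * d (L!Suc i) (L!i)) * (T1 * T2 * P1 * P2)"
    using e1 e2 h1 h3 by (simp add: algebra_simps)
  have rhs: "ell V adj d (L!Suc i) a * ell V adj d (L!i) b
     = ell V adj d (L!i) (L!Suc i) * (T1 * T2 * P1 * P2)"
    using e3 e4 e5 h2 h4 by (simp add: algebra_simps)
  show ?thesis unfolding lhs rhs using det Cpos by simp
qed

end



context fixes V :: "'v set" and adj :: "'v \<Rightarrow> 'v \<Rightarrow> bool" and d :: "'v \<Rightarrow> 'v \<Rightarrow> nat"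
  assumes S: "splice_diagram V adj d"
begin

lemma w_nonneg: "wvec V adj d u l \<ge> 0"
  unfolding wvec_def by auto

lemma w_leaf_self: "is_leaf V adj u \<Longrightarrow> wvec V adj d u u = 1"
  unfolding wvec_def by auto

lemma w_leaf_other: "is_leaf V adj u \<Longrightarrow> l \<noteq> u \<Longrightarrow> wvec V adj d u l = 0"
  unfolding wvec_def by auto

lemma w_node: "is_node V adj u \<Longrightarrow> is_leaf V adj l \<Longrightarrow> wvec V adj d u l = real (ell V adj d u l)"
  unfolding wvec_def using leaf_not_node[OF S] by auto

lemma w_node_pos: "is_node V adj u \<Longrightarrow> is_leaf V adj l \<Longrightarrow> wvec V adj d u l > 0"
  using w_node ell_pos[OF S] by simp

lemma leaves_fin: "finite (leaves V adj)"
proof -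
  have "leaves V adj \<subseteq> V" unfolding leaves_def is_leaf_def by auto
  then show ?thesis using finV[OF T[OF S]] finite_subset by blast
qed

lemma N_pos:
  assumes u: "u \<in> V" and l0: "is_leaf V adj l0"
  shows "(\<Sum>m \<in> leaves V adj. \<bar>wvec V adj d u m\<bar>) > 0"
proof (cases "is_leaf V adj u")
  case True
  show ?thesis
    by (rule sum_pos2[OF leaves_fin, of u]) (use True w_leaf_self in \<open>auto simp: leaves_def\<close>)
next
  case False
  then have "is_node V adj u" using u unfolding is_leaf_def is_node_def by simp
  then show ?thesis
    by (intro sum_pos2[OF leaves_fin, of l0]) (use l0 w_node_pos[OF \<open>is_node V adj u\<close> l0] in \<open>auto simp: leaves_def\<close>)
qed

lemma has_nbr:
  assumes u: "u \<in> V" shows "\<exists>w. adj u w"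
proof -
  obtain t where t: "t \<in> V" "valency V adj t \<ge> 3" using S unfolding splice_diagram_def by blast
  show ?thesis
  proof (cases "t = u")
    case True
    then have "nbrs V adj u \<noteq> {}" using t unfolding valency_def by auto
    then show ?thesis unfolding nbrs_def by auto
  next
    case False
    obtain p where p: "is_path adj V p u t" using T[OF S] u t unfolding is_tree_def by blast
    have "length p \<noteq> 1"
    proof
      assume "length p = 1"
      then obtain x where "p = [x]" by (cases p) auto
      then show False using p False unfolding is_path_def by fastforce
    qed
    moreover have "p \<noteq> []" using p unfolding is_path_def by simp
    ultimately have "Suc 0 < length p" by (cases p) auto
    then have "adj (p!0) (p!Suc 0)" using p unfolding is_path_def by blast
    moreover have "p!0 = u" using p unfolding is_path_def by (metis hd_conv_nth)
    ultimately show ?thesis by auto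
  qed
qed

lemma real_edge:
  assumes c: "c \<in> realization V adj"
  shows "\<exists>p q. adj p q \<and> (\<forall>x. x \<noteq> p \<and> x \<noteq> q \<longrightarrow> c x = 0)"
proof -
  obtain u v where uv: "u \<in> V" "v \<in> V" "u = v \<or> adj u v" "\<forall>x. x \<noteq> u \<and> x \<noteq> v \<longrightarrow> c x = 0"
    using c unfolding realization_def by blast
  show ?thesis
  proof (cases "adj u v")
    case True then show ?thesis using uv by blast
  next
    case False
    then have "u = v" using uv by blast
    obtain w where "adj u w" using has_nbr[OF uv(1)] by blast
    then show ?thesis using uv \<open>u = v\<close> by blast
  qed
qed

lemma sum_two:
  assumes "finite A" "p \<in> A" "q \<in> A" "p \<noteq> q" "\<forall>x. x \<noteq> p \<and> x \<noteq> q \<longrightarrow> f x = 0"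
  shows "sum f A = f p + f q"
proof -
  have "sum f A = sum f {p, q}"
    by (rule sum.mono_neutral_right) (use assms in auto)
  then show ?thesis using assms by simp
qed

lemma c_repr:
  assumes "p \<noteq> q" "\<forall>x. x \<noteq> p \<and> x \<noteq> q \<longrightarrow> c x = 0"
  shows "c = (\<lambda>z. if z = p then c p else if z = q then c q else 0)"
  using assms by fastforce

end

context fixes V :: "'v set" and adj :: "'v \<Rightarrow> 'v \<Rightarrow> bool" and d :: "'v \<Rightarrow> 'v \<Rightarrow> nat"
  assumes S: "splice_diagram V adj d" and E: "edge_det_cond V adj d"
begin

lemma W_cons:
  assumes L: "is_path adj V L a b" and al: "is_leaf V adj a" and bl: "is_leaf V adj b"
    and kL: "length L = Suc k" and m: "m < k"
  shows "wvec V adj d (L!m) a * wvec V adj d (L!Suc m) b > wvec V adj d (L!Suc m) a * wvec V adj d (L!m) b"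
proof -
  have dL: "distinct L" using L unfolding is_path_def by blast
  have L0: "L!0 = a" using L unfolding is_path_def by (metis hd_conv_nth)
  have Lk: "L!k = b" using L kL unfolding is_path_def by (metis diff_Suc_1 last_conv_nth list.size(3) nat.distinct(1))
  have ab: "a \<noteq> b" using L0 Lk dL kL m nth_eq_iff_index_eq by fastforce
  have inn: "0 < j \<Longrightarrow> j < k \<Longrightarrow> is_node V adj (L!j)" for j using inner_node[OF S L] kL by simp
  consider "m = 0" | "Suc m = k" "0 < m" | "0 < m" "Suc m < k" using m by linarith
  then show ?thesis
  proof cases
    case 1
    have "wvec V adj d (L!Suc 0) b > 0"
    proof (cases "Suc 0 = k")
      case True
      then have "L!Suc 0 = b" using Lk by simp
      then show ?thesis using w_leaf_self[OF S bl] by simp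
    next
      case False then show ?thesis using inn[of "Suc 0"] m 1 w_node_pos[OF S] bl by simp
    qed
    then show ?thesis using 1 L0 w_leaf_self[OF S al] w_leaf_other[OF S al] ab by simp
  next
    case 2
    have "wvec V adj d (L!m) a > 0" using inn[of m] 2 w_node_pos[OF S] al by simp
    then show ?thesis using 2 Lk w_leaf_self[OF S bl] w_leaf_other[OF S bl] ab by simp
  next
    case 3
    have "ell V adj d (L!m) a * ell V adj d (L!Suc m) b > ell V adj d (L!Suc m) a * ell V adj d (L!m) b"
      using key_ell[OF S E L al bl kL 3] .
    then have "real (ell V adj d (L!m) a) * real (ell V adj d (L!Suc m) b) > real (ell V adj d (L!Suc m) a) * real (ell V adj d (L!m) b)"
      by (metis of_nat_less_iff of_nat_mult)
    then show ?thesis using w_node[OF S] inn[of m] inn[of "Suc m"] 3 al bl by simp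
  qed
qed

lemma R_cons:
  assumes L: "is_path adj V L a b" and al: "is_leaf V adj a" and bl: "is_leaf V adj b"
    and kL: "length L = Suc k" and m: "m < k"
  shows "rho_vertex V adj d (L!m) a * rho_vertex V adj d (L!Suc m) b > rho_vertex V adj d (L!Suc m) a * rho_vertex V adj d (L!m) b"
proof -
  define N where "N u = (\<Sum>m \<in> leaves V adj. \<bar>wvec V adj d u m\<bar>)" for u
  have inV: "j < length L \<Longrightarrow> L!j \<in> V" for j using L unfolding is_path_def by auto
  have N1: "N (L!m) > 0" "N (L!Suc m) > 0" unfolding N_def using N_pos[OF S inV al] m kL by auto
  have rv: "rho_vertex V adj d u l = wvec V adj d u l / N u" for u l unfolding rho_vertex_def N_def ..
  have w: "wvec V adj d (L!m) a * wvec V adj d (L!Suc m) b > wvec V adj d (L!Suc m) a * wvec V adj d (L!m) b"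
    using W_cons[OF L al bl kL m] .
  have "wvec V adj d (L!m) a * wvec V adj d (L!Suc m) b / (N (L!m) * N (L!Suc m))
      > wvec V adj d (L!Suc m) a * wvec V adj d (L!m) b / (N (L!m) * N (L!Suc m))"
    using w N1 by (intro divide_strict_right_mono) auto
  then show ?thesis unfolding rv by (simp add: algebra_simps)
qed

lemma R_nonneg: "rho_vertex V adj d u l \<ge> 0"
  unfolding rho_vertex_def using w_nonneg[OF S] by (simp add: sum_nonneg)

end



theorem theorem5p11:
  fixes V :: "'v set" and adj :: "'v \<Rightarrow> 'v \<Rightarrow> bool" and d :: "'v \<Rightarrow> 'v \<Rightarrow> nat"
  assumes "splice_diagram V adj d"
    and "edge_det_cond V adj d"
  shows "inj_on (rho V adj d) (realization V adj)"
proof (rule inj_onI)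
  note S = assms(1) and E = assms(2)
  note TT = T[OF S]
  fix c c' assume c: "c \<in> realization V adj" and c': "c' \<in> realization V adj"
    and eq: "rho V adj d c = rho V adj d c'"
  obtain a1 b1 where e1: "adj a1 b1" and z1: "\<forall>x. x \<noteq> a1 \<and> x \<noteq> b1 \<longrightarrow> c x = 0"
    using real_edge[OF S c] by blast
  obtain a2 b2 where e2: "adj a2 b2" and z2: "\<forall>x. x \<noteq> a2 \<and> x \<noteq> b2 \<longrightarrow> c' x = 0"
    using real_edge[OF S c'] by blast
  obtain p x y where p: "is_path adj V p x y" "Suc 1 \<le> length p" "{a1,b1,a2,b2} \<subseteq> set p"
    using two_edges_path[OF TT e1 e2] by blast
  obtain L where L: "is_path adj V L (hd L) (last L)" "is_leaf V adj (hd L)" "is_leaf V adj (last L)"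
    "set p \<subseteq> set L"
    using leaf_path[OF TT p(1) p(2)] by blast
  define A where "A = hd L"
  define B where "B = last L"
  have LP: "is_path adj V L A B" using L(1) unfolding A_def B_def .
  have lA: "is_leaf V adj A" and lB: "is_leaf V adj B" using L unfolding A_def B_def by auto
  have dL: "distinct L" using LP unfolding is_path_def by blast
  have inV: "m < length L \<Longrightarrow> L!m \<in> V" for m using LP unfolding is_path_def by auto
  obtain i where i: "Suc i < length L" "{a1,b1} = {L!i, L!Suc i}"
    using adj_consec[OF TT LP e1] p(3) L(4) by blast
  obtain j where j: "Suc j < length L" "{a2,b2} = {L!j, L!Suc j}"
    using adj_consec[OF TT LP e2] p(3) L(4) by blast
  obtain k where kL: "length L = Suc k" using i(1) by (cases "length L") auto
  have ik: "i < k" "j < k" using i j kL by auto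
  have neq: "m < length L \<Longrightarrow> n < length L \<Longrightarrow> m \<noteq> n \<Longrightarrow> L!m \<noteq> L!n" for m n
    using dL nth_eq_iff_index_eq by blast
  have zi: "\<forall>x. x \<noteq> L!i \<and> x \<noteq> L!Suc i \<longrightarrow> c x = 0" using z1 i(2) by blast
  have zj: "\<forall>x. x \<noteq> L!j \<and> x \<noteq> L!Suc j \<longrightarrow> c' x = 0" using z2 j(2) by blast
  have nei: "L!i \<noteq> L!Suc i" and nej: "L!j \<noteq> L!Suc j" using neq i j by auto
  have cnn: "c v \<ge> 0" "c' v \<ge> 0" for v using c c' unfolding realization_def by auto
  have cs: "sum c V = 1" "sum c' V = 1" using c c' unfolding realization_def by auto
  have fV: "finite V" using finV[OF TT] .
  have s1: "c (L!i) + c (L!Suc i) = 1"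
    using sum_two[OF S fV inV inV nei zi] i cs by simp
  have s2: "c' (L!j) + c' (L!Suc j) = 1"
    using sum_two[OF S fV inV inV nej zj] j cs by simp
  have r1: "rho V adj d c l = c (L!i) * rho_vertex V adj d (L!i) l + c (L!Suc i) * rho_vertex V adj d (L!Suc i) l" for l
    unfolding rho_def by (rule sum_two[OF S fV inV inV nei]) (use zi i in auto)
  have r2: "rho V adj d c' l = c' (L!j) * rho_vertex V adj d (L!j) l + c' (L!Suc j) * rho_vertex V adj d (L!Suc j) l" for l
    unfolding rho_def by (rule sum_two[OF S fV inV inV nej]) (use zj j in auto)
  define xx where "xx m = rho_vertex V adj d (L!m) A" for m
  define yy where "yy m = rho_vertex V adj d (L!m) B" for m
  have pos: "\<forall>m\<le>k. xx m \<ge> 0 \<and> yy m \<ge> 0" unfolding xx_def yy_def using R_nonneg[OF S E] by auto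
  have cons: "\<forall>m<k. xx m * yy (Suc m) > xx (Suc m) * yy m"
    unfolding xx_def yy_def using R_cons[OF S E LP lA lB kL] by auto
  have ex: "c (L!i) * xx i + c (L!Suc i) * xx (Suc i) = c' (L!j) * xx j + c' (L!Suc j) * xx (Suc j)"
    using r1[of A] r2[of A] eq unfolding xx_def by simp
  have ey: "c (L!i) * yy i + c (L!Suc i) * yy (Suc i) = c' (L!j) * yy j + c' (L!Suc j) * yy (Suc j)"
    using r1[of B] r2[of B] eq unfolding yy_def by simp
  have cr: "c = (\<lambda>z. if z = L!i then c (L!i) else if z = L!Suc i then c (L!Suc i) else 0)"
    using c_repr[OF S nei zi] .
  have cr': "c' = (\<lambda>z. if z = L!j then c' (L!j) else if z = L!Suc j then c' (L!Suc j) else 0)"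
    using c_repr[OF S nej zj] .
  have "(i = j \<and> c (L!i) = c' (L!j)) \<or> (j = Suc i \<and> c (L!i) = 0 \<and> c' (L!Suc j) = 0)
        \<or> (i = Suc j \<and> c' (L!j) = 0 \<and> c (L!Suc i) = 0)"
    using alg[OF pos cons ik cnn(1) cnn(1) cnn(2) cnn(2) s1 s2 ex ey] .
  then show "c = c'"
  proof (elim disjE conjE)
    assume h: "i = j" "c (L!i) = c' (L!j)"
    then have "c (L!Suc i) = c' (L!Suc j)" using s1 s2 by simp
    then show ?thesis using cr cr' h by (metis)
  next
    assume h: "j = Suc i" "c (L!i) = 0" "c' (L!Suc j) = 0"
    have h2: "c (L!Suc i) = 1" "c' (L!j) = 1" using h s1 s2 by auto
    have n2: "L!i \<noteq> L!Suc (Suc i)" using neq j h kL by simp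
    show ?thesis
    proof
      fix z show "c z = c' z"
        using fun_cong[OF cr, of z] fun_cong[OF cr', of z] h h2 n2 nei nej by auto
    qed
  next
    assume h: "i = Suc j" "c' (L!j) = 0" "c (L!Suc i) = 0"
    have h2: "c' (L!Suc j) = 1" "c (L!i) = 1" using h s1 s2 by auto
    have n2: "L!j \<noteq> L!Suc (Suc j)" using neq i h kL by simp
    show ?thesis
    proof
      fix z show "c z = c' z"
        using fun_cong[OF cr, of z] fun_cong[OF cr', of z] h h2 n2 nei nej by auto
    qed
  qed
qed


end
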